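(* Let $X$ be an $n$-dimensional polyhedral normed space and let $Y \subseteq X$ be a $k$-dimensional subspace, where $1 \leq k \leq n-1$. Then there exists a projection $P \in \mathcal{P}_{\min}(X, Y)$ with at least $n$ norming pairs.
   Context: A normed space $X=(\mathbb{R}^n,\|\cdot\|)$ is polyhedral if its unit ball $B_X$ is a convex polytope; then $\mathrm{ext}\,B_X$ and $\mathrm{ext}\,B_{X^*}$ (extreme points of the unit balls of $X$ and its dual) are finite. A projection onto $Y$ is a linear $P:X\to Y$ with $P|_Y=\mathrm{id}_Y$; $\lambda(Y,X)$ is the infimum of the operator norms of such projections and $\mathcal{P}_{\min}(X,Y)$ is the set of projections of norm $\lambda(Y,X)$. A norming pair for a projection $P$ is a pair $(x,f)\in \mathrm{ext}\,B_X\times \mathrm{ext}\,B_{X^*}$ with $f(P(x))=\|P\|$. *)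

theory Defs
  imports "HOL-Analysis.Analysis"
begin

definition is_norm_fun :: "(real^'n \<Rightarrow> real) \<Rightarrow> bool" where
  "is_norm_fun N \<longleftrightarrow> (\<forall>x. 0 \<le> N x) \<and> (\<forall>x. N x = 0 \<longleftrightarrow> x = 0)
     \<and> (\<forall>c x. N (c *\<^sub>R x) = \<bar>c\<bar> * N x) \<and> (\<forall>x y. N (x + y) \<le> N x + N y)"

definition unit_ball_N :: "(real^'n \<Rightarrow> real) \<Rightarrow> (real^'n) set" where
  "unit_ball_N N = {x. N x \<le> 1}"

definition polyhedral_norm :: "(real^'n \<Rightarrow> real) \<Rightarrow> bool" where
  "polyhedral_norm N \<longleftrightarrow> is_norm_fun N \<and> polytope (unit_ball_N N)"

text \<open>Unit ball of the dual space; a linear functional f is identified with the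
  vector u such that f x = u \<bullet> x.\<close>
definition dual_ball_N :: "(real^'n \<Rightarrow> real) \<Rightarrow> (real^'n) set" where
  "dual_ball_N N = {u. \<forall>x. \<bar>u \<bullet> x\<bar> \<le> N x}"

definition is_projection :: "(real^'n) set \<Rightarrow> (real^'n \<Rightarrow> real^'n) \<Rightarrow> bool" where
  "is_projection Y P \<longleftrightarrow> linear P \<and> range P \<subseteq> Y \<and> (\<forall>y\<in>Y. P y = y)"

definition op_norm_N :: "(real^'n \<Rightarrow> real) \<Rightarrow> (real^'n \<Rightarrow> real^'n) \<Rightarrow> real" where
  "op_norm_N N P = Sup {N (P x) | x. N x \<le> 1}"

definition proj_const :: "(real^'n \<Rightarrow> real) \<Rightarrow> (real^'n) set \<Rightarrow> real" where
  "proj_const N Y = Inf {op_norm_N N P | P. is_projection Y P}"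

definition min_projections :: "(real^'n \<Rightarrow> real) \<Rightarrow> (real^'n) set \<Rightarrow> (real^'n \<Rightarrow> real^'n) set" where
  "min_projections N Y = {P. is_projection Y P \<and> op_norm_N N P = proj_const N Y}"

definition norming_pairs :: "(real^'n \<Rightarrow> real) \<Rightarrow> (real^'n \<Rightarrow> real^'n) \<Rightarrow> ((real^'n) \<times> (real^'n)) set" where
  "norming_pairs N P = {(x, u) | x u. (x extreme_point_of (unit_ball_N N)) \<and>
      (u extreme_point_of (dual_ball_N N)) \<and> (u \<bullet> P x) = op_norm_N N P}"

end

theory Submission
  imports Defs
begin

lemma linear_le_hull:
  fixes g :: "'a::real_vector \<Rightarrow> real"
  assumes lg: "linear g" and hv: "\<And>v. v \<in> V \<Longrightarrow> g v \<le> c" and x: "x \<in> convex hull V"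
  shows "g x \<le> c"
proof -
  have "convex {x. g x \<le> c}"
  proof (rule convexI)
    fix a b :: 'a and u v :: real
    assume a: "a \<in> {x. g x \<le> c}" and b: "b \<in> {x. g x \<le> c}" and u: "0 \<le> u" and v: "0 \<le> v" and uv: "u + v = 1"
    have "g (u *\<^sub>R a + v *\<^sub>R b) = u * g a + v * g b"
      using lg by (simp add: linear_add linear_scale)
    also have "\<dots> \<le> u * c + v * c"
      using a b u v by (intro add_mono mult_left_mono) auto
    also have "\<dots> = c" using uv by (simp add: distrib_right[symmetric])
    finally show "u *\<^sub>R a + v *\<^sub>R b \<in> {x. g x \<le> c}" by simp
  qed
  moreover have "V \<subseteq> {x. g x \<le> c}" using hv by auto
  ultimately have "convex hull V \<subseteq> {x. g x \<le> c}" by (rule hull_minimal[rotated])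
  then show ?thesis using x by auto
qed

lemma linear_inner_left_fix: "linear (\<lambda>x. (u::'a::real_inner) \<bullet> x)"
  by (simp add: linear_iff inner_add_right)

locale pnorm =
  fixes N :: "real^'n \<Rightarrow> real"
  assumes poly: "polyhedral_norm N"
begin

abbreviation "B \<equiv> unit_ball_N N"
definition "V = {x. x extreme_point_of B}"
abbreviation "D \<equiv> dual_ball_N N"
definition "W = {u. u extreme_point_of D}"

lemma nf: "is_norm_fun N" using poly polyhedral_norm_def by blast
lemma N0[simp]: "N 0 = 0" using nf unfolding is_norm_fun_def by blast
lemma Nge0: "0 \<le> N x" using nf unfolding is_norm_fun_def by blast
lemma Neq0: "N x = 0 \<longleftrightarrow> x = 0" using nf unfolding is_norm_fun_def by blast
lemma Nscale: "N (c *\<^sub>R x) = \<bar>c\<bar> * N x" using nf unfolding is_norm_fun_def by blast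
lemma Ntri: "N (x + y) \<le> N x + N y" using nf unfolding is_norm_fun_def by blast
lemma Nminus: "N (- x) = N x" using Nscale[of "-1" x] by simp
lemma Npos: "x \<noteq> 0 \<Longrightarrow> 0 < N x" using Nge0 Neq0 by (metis less_eq_real_def)

lemma inB: "x \<in> B \<longleftrightarrow> N x \<le> 1" by (simp add: unit_ball_N_def)
lemma polyB: "polytope B" using poly polyhedral_norm_def by blast
lemma compactB: "compact B" using polyB polytope_imp_compact by blast
lemma convexB: "convex B" using polyB polytope_imp_convex by blast
lemma finV: "finite V"
  unfolding V_def using finite_polyhedron_extreme_points polytope_imp_polyhedron polyB by blast
lemma B_hull: "B = convex hull V"
  unfolding V_def using Krein_Milman_Minkowski compactB convexB by blast
lemma V_sub: "V \<subseteq> B" by (auto simp: V_def extreme_point_of_def)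
lemma zero_B: "0 \<in> B" by (simp add: inB)
lemma V_ne: "V \<noteq> {}" using B_hull zero_B by auto

lemma normalize_B: "x \<noteq> 0 \<Longrightarrow> (1 / N x) *\<^sub>R x \<in> B"
  using Npos[of x] by (simp add: inB Nscale)

lemma hull_le: fixes g :: "real^'n \<Rightarrow> real" assumes "linear g" "\<And>v. v \<in> V \<Longrightarrow> g v \<le> c" "x \<in> B" shows "g x \<le> c"
  using linear_le_hull[OF assms(1,2)] assms(3) B_hull by blast

lemma D_alt: "D = {u. \<forall>v\<in>V. u \<bullet> v \<le> 1}"
proof (intro set_eqI iffI)
  fix u assume "u \<in> D"
  then have h: "\<bar>u \<bullet> x\<bar> \<le> N x" for x by (simp add: dual_ball_N_def)
  have "u \<bullet> v \<le> 1" if "v \<in> V" for v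
  proof -
    have "N v \<le> 1" using that V_sub inB by blast
    then show ?thesis using h[of v] by linarith
  qed
  then show "u \<in> {u. \<forall>v\<in>V. u \<bullet> v \<le> 1}" by simp
next
  fix u assume "u \<in> {u. \<forall>v\<in>V. u \<bullet> v \<le> 1}"
  hence h: "\<forall>v\<in>V. u \<bullet> v \<le> 1" by simp
  have le: "u \<bullet> x \<le> 1" if "x \<in> B" for x
    using hull_le[of "\<lambda>x. u \<bullet> x" 1 x] h that linear_inner_left_fix by blast
  show "u \<in> D" unfolding dual_ball_N_def
  proof (intro CollectI allI)
    fix x show "\<bar>u \<bullet> x\<bar> \<le> N x"
    proof (cases "x = 0")
      case True then show ?thesis by simp
    next
      case False
      let ?z = "(1 / N x) *\<^sub>R x"
      have p: "0 < N x" using Npos False by blast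
      have "?z \<in> B" using normalize_B False by blast
      moreover have "- ?z \<in> B" using calculation by (simp add: inB Nminus)
      ultimately have "u \<bullet> ?z \<le> 1" "u \<bullet> (- ?z) \<le> 1" using le by blast+
      then have "u \<bullet> x / N x \<le> 1" "- (u \<bullet> x) / N x \<le> 1" by simp_all
      then have "u \<bullet> x \<le> 1 * N x" "- (u \<bullet> x) \<le> 1 * N x" using p by (simp_all only: divide_le_eq)
      then show ?thesis by linarith
    qed
  qed
qed

lemma polyhedronD: "polyhedron D"
proof -
  have "D = \<Inter> ((\<lambda>v. {u. v \<bullet> u \<le> 1}) ` V)" by (auto simp: D_alt inner_commute)
  then show ?thesis using finV by (auto intro!: polyhedron_Inter polyhedron_halfspace_le)
qed

lemma boundedD: "bounded D"
proof -
  have "norm u \<le> (\<Sum>i\<in>UNIV. N (axis i 1))" if "u \<in> D" for u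
  proof -
    have h: "\<bar>u \<bullet> x\<bar> \<le> N x" for x using that by (simp add: dual_ball_N_def)
    have "norm u \<le> (\<Sum>i\<in>UNIV. \<bar>u $ i\<bar>)" by (rule norm_le_l1_cart)
    also have "\<dots> \<le> (\<Sum>i\<in>UNIV. N (axis i 1))"
    proof (rule sum_mono)
      fix i show "\<bar>u $ i\<bar> \<le> N (axis i 1)" using h[of "axis i 1"] by (simp add: inner_axis)
    qed
    finally show ?thesis .
  qed
  then show ?thesis unfolding bounded_iff by blast
qed

lemma compactD: "compact D"
  using boundedD polyhedronD polyhedron_imp_closed compact_eq_bounded_closed by blast
lemma convexD: "convex D" using polyhedronD polyhedron_imp_convex by blast
lemma finW: "finite W" unfolding W_def using finite_polyhedron_extreme_points polyhedronD by blast
lemma D_hull: "D = convex hull W"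
  unfolding W_def using Krein_Milman_Minkowski compactD convexD by blast
lemma W_sub: "W \<subseteq> D" by (auto simp: W_def extreme_point_of_def)
lemma zero_D: "0 \<in> D" by (simp add: dual_ball_N_def Nge0)
lemma W_ne: "W \<noteq> {}" using D_hull zero_D by auto
lemma inD: "u \<in> D \<Longrightarrow> \<bar>u \<bullet> x\<bar> \<le> N x" by (simp add: dual_ball_N_def)

lemma linear_inner_left_var: "linear (\<lambda>u. u \<bullet> (y::real^'n))"
  by (simp add: linear_iff inner_add_left)

lemma N_ge_W: "w \<in> W \<Longrightarrow> w \<bullet> y \<le> N y"
  using W_sub inD by (meson abs_ge_self order_trans subsetD)

lemma D_le_MaxW: "u \<in> D \<Longrightarrow> u \<bullet> y \<le> Max ((\<lambda>w. w \<bullet> y) ` W)"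
  using linear_le_hull[of "\<lambda>u. u \<bullet> y" W "Max ((\<lambda>w. w \<bullet> y) ` W)" u] D_hull finW
    linear_inner_left_var by auto

lemma N_max: "N y = Max ((\<lambda>w. w \<bullet> y) ` W)"
proof (rule antisym)
  show "Max ((\<lambda>w. w \<bullet> y) ` W) \<le> N y" using finW W_ne N_ge_W by auto
next
  let ?m = "Max ((\<lambda>w. w \<bullet> y) ` W)"
  show "N y \<le> ?m"
  proof (rule ccontr)
    assume "\<not> N y \<le> ?m"
    hence lt: "?m < N y" by simp
    have m0: "0 \<le> ?m" using D_le_MaxW[OF zero_D, of y] by simp
    define t where "t = (?m + N y) / 2"
    have t: "0 < t" "?m < t" "t < N y" using lt m0 by (auto simp: t_def)
    define z where "z = (1 / t) *\<^sub>R y"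
    have "N z = N y / t" using t by (simp add: Nscale z_def)
    also have "\<dots> > 1" using t by simp
    finally have "z \<notin> B" by (simp add: inB)
    then obtain a b where ab: "a \<bullet> z < b" "\<forall>x\<in>B. a \<bullet> x > b"
      using separating_hyperplane_closed_point[OF convexB compact_imp_closed[OF compactB]] by blast
    have b0: "b < 0" using ab(2) zero_B by fastforce
    define u where "u = (1 / b) *\<^sub>R a"
    have uB: "u \<bullet> x < 1" if "x \<in> B" for x
    proof -
      have "b < a \<bullet> x" using ab(2) that by blast
      then show ?thesis using b0 by (simp add: u_def divide_less_eq)
    qed
    have "u \<in> D" unfolding D_alt using uB V_sub by (auto intro: less_imp_le)
    then have le: "u \<bullet> y \<le> ?m" by (rule D_le_MaxW)
    have q: "1 < p / b" if "p < b" for p using that b0 by (simp add: less_divide_eq)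
    have "1 < u \<bullet> z" using q[OF ab(1)] by (simp add: u_def)
    then have "1 < (u \<bullet> y) / t" by (simp add: z_def)
    then have "t < u \<bullet> y" using t by (simp add: less_divide_eq)
    then show False using le t by linarith
  qed
qed

definition FF :: "real^'n^'n \<Rightarrow> real" where
  "FF M = Max ((\<lambda>(x,w). w \<bullet> (M *v x)) ` (V \<times> W))"

lemma finVW: "finite (V \<times> W)" using finV finW by simp
lemma VW_ne: "V \<times> W \<noteq> {}" using V_ne W_ne by simp

lemma FF_ge: "x \<in> V \<Longrightarrow> w \<in> W \<Longrightarrow> w \<bullet> (M *v x) \<le> FF M"
  unfolding FF_def using finVW by (intro Max_ge) auto

lemma FF_attained: "\<exists>x\<in>V. \<exists>w\<in>W. w \<bullet> (M *v x) = FF M"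
proof -
  have "FF M \<in> (\<lambda>(x,w). w \<bullet> (M *v x)) ` (V \<times> W)"
    unfolding FF_def using finVW VW_ne by (intro Max_in) auto
  then obtain x w where "x \<in> V" "w \<in> W" "FF M = w \<bullet> (M *v x)" by auto
  then show ?thesis by metis
qed

lemma linear_wM: fixes M :: "real^'n^'n" and w :: "real^'n" shows "linear (\<lambda>x. w \<bullet> (M *v x))"
proof -
  have "linear ((\<lambda>y. w \<bullet> y) \<circ> (\<lambda>x. M *v x))"
    by (rule linear_compose[OF matrix_vector_mul_linear linear_inner_left_fix])
  then show ?thesis by (simp add: o_def)
qed

lemma N_M_le: "x \<in> B \<Longrightarrow> N (M *v x) \<le> FF M"
proof -
  assume x: "x \<in> B"
  have "w \<bullet> (M *v x) \<le> FF M" if w: "w \<in> W" for w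
    using hull_le[OF linear_wM, of w M "FF M" x] FF_ge[OF _ w] x by blast
  then show ?thesis unfolding N_max[of "M *v x"] using finW W_ne by auto
qed

lemma opnorm_FF: "op_norm_N N (\<lambda>x. M *v x) = FF M"
  unfolding op_norm_N_def
proof (rule cSup_eq_maximum)
  obtain x w where xw: "x \<in> V" "w \<in> W" "w \<bullet> (M *v x) = FF M" using FF_attained by blast
  have xB: "x \<in> B" using xw V_sub by blast
  have e: "FF M = N (M *v x)" using N_M_le[of x M] xB N_ge_W[OF xw(2), of "M *v x"] xw(3) by linarith
  have "N x \<le> 1" using xB inB by blast
  then show "FF M \<in> {N (M *v x) |x. N x \<le> 1}" using e by blast
next
  fix s assume "s \<in> {N (M *v x) |x. N x \<le> 1}"
  then show "s \<le> FF M" using N_M_le inB by blast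
qed


end


context pnorm begin
lemma linear_Mx: "linear (\<lambda>M::real^'n^'n. w \<bullet> (M *v x))"
  by (simp add: linear_iff matrix_vector_mult_add_rdistrib inner_add_right
      scaleR_matrix_vector_assoc[symmetric])

lemma cont_Mx: "continuous_on UNIV (\<lambda>M::real^'n^'n. w \<bullet> (M *v x))"
  by (intro linear_continuous_on linear_conv_bounded_linear[THEN iffD1] linear_Mx)

lemma cont_Max_fin:
  fixes f :: "'a \<Rightarrow> 'b::topological_space \<Rightarrow> real"
  assumes "finite A" "A \<noteq> {}" "\<And>a. a \<in> A \<Longrightarrow> continuous_on S (f a)"
  shows "continuous_on S (\<lambda>x. Max ((\<lambda>a. f a x) ` A))"
  using assms
proof (induction A rule: finite_ne_induct)
  case (singleton a) then show ?case by simp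
next
  case (insert a A)
  have "(\<lambda>x. Max ((\<lambda>a. f a x) ` insert a A)) = (\<lambda>x. max (f a x) (Max ((\<lambda>a. f a x) ` A)))"
    using insert.hyps by (simp add: Max_insert)
  then show ?case using insert by (auto intro!: continuous_on_max)
qed

lemma cont_FF: "continuous_on UNIV FF"
proof -
  have "continuous_on UNIV (\<lambda>M. Max ((\<lambda>p. (\<lambda>(x,w) M. w \<bullet> (M *v x)) p M) ` (V \<times> W)))"
    using finVW VW_ne by (intro cont_Max_fin) (auto simp: cont_Mx split: prod.splits)
  moreover have "(\<lambda>M. Max ((\<lambda>p. (\<lambda>(x,w) M. w \<bullet> (M *v x)) p M) ` (V \<times> W))) = FF"
    by (rule ext) (simp add: FF_def case_prod_beta)
  ultimately show ?thesis by metis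
qed

lemma bounded_B: obtains R where "0 < R" "\<And>x. x \<in> B \<Longrightarrow> norm x \<le> R"
  using compactB compact_imp_bounded bounded_pos by metis

lemma norm_le_N: obtains R where "0 < R" "\<And>x. norm x \<le> R * N x"
proof -
  obtain R where R: "0 < R" "\<And>x. x \<in> B \<Longrightarrow> norm x \<le> R" using bounded_B by metis
  have "norm x \<le> R * N x" for x
  proof (cases "x = 0")
    case False
    have p: "0 < N x" using Npos False by blast
    have "norm ((1 / N x) *\<^sub>R x) \<le> R" using R(2) normalize_B False by blast
    then have "norm x / N x \<le> R" using p by simp
    then show ?thesis using p by (simp add: divide_le_eq mult.commute)
  qed simp
  then show ?thesis using R(1) that by blast
qed

lemma norm_vec_le_sum: "norm (x::('a::real_normed_vector)^'m) \<le> (\<Sum>i\<in>UNIV. norm (x $ i))"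
  by (simp add: norm_vec_def L2_set_le_sum)

lemma FF_nonneg: "0 \<le> FF M"
  using N_M_le[OF zero_B, of M] Nge0[of "M *v 0"] by linarith

lemma entry_bound:
  obtains K where "0 \<le> K" "\<And>M i j. \<bar>M $ i $ j\<bar> \<le> K * FF M"
proof -
  obtain R where R: "0 < R" "\<And>x. norm x \<le> R * N x" using norm_le_N by metis
  define K where "K = R * (\<Sum>j\<in>UNIV. N (axis j (1::real)))"
  have "\<bar>M $ i $ j\<bar> \<le> K * FF M" for M i j
  proof -
    let ?e = "axis j (1::real) :: real^'n"
    have e0: "?e \<noteq> 0" by (simp add: axis_eq_0_iff)
    have p: "0 < N ?e" using Npos e0 by blast
    have "\<bar>M $ i $ j\<bar> = \<bar>(M *v ?e) $ i\<bar>" by (simp add: matrix_vector_mult_basis column_def)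
    also have "\<dots> \<le> norm (M *v ?e)" by (rule component_le_norm_cart)
    also have "\<dots> \<le> R * N (M *v ?e)" by (rule R(2))
    finally have a: "\<bar>M $ i $ j\<bar> \<le> R * N (M *v ?e)" .
    have b: "N (M *v ?e) = N ?e * N (M *v ((1 / N ?e) *\<^sub>R ?e))"
      using p by (simp add: matrix_vector_mult_scaleR Nscale)
    have c: "N (M *v ((1 / N ?e) *\<^sub>R ?e)) \<le> FF M" using N_M_le normalize_B e0 by blast
    have d: "N ?e * N (M *v ((1 / N ?e) *\<^sub>R ?e)) \<le> N ?e * FF M"
      using c p by (intro mult_left_mono) auto
    have "R * N (M *v ?e) \<le> R * (N ?e * FF M)"
      using b d R(1) by (intro mult_left_mono) auto
    with a have "\<bar>M $ i $ j\<bar> \<le> R * (N ?e * FF M)" by linarith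
    also have "\<dots> \<le> R * ((\<Sum>j\<in>UNIV. N (axis j (1::real))) * FF M)"
      using R(1) FF_nonneg
      by (intro mult_left_mono mult_right_mono member_le_sum) (auto simp: Nge0)
    finally show ?thesis by (simp add: K_def mult.assoc)
  qed
  moreover have "0 \<le> K" unfolding K_def using R(1) by (intro mult_nonneg_nonneg sum_nonneg) (auto simp: Nge0)
  ultimately show ?thesis using that by blast
qed

end

locale pproj = pnorm N for N :: "real^'n \<Rightarrow> real" +
  fixes Y :: "(real^'n) set"
  assumes subY: "subspace Y"
begin

definition "Proj = {M::real^'n^'n. (\<forall>x. M *v x \<in> Y) \<and> (\<forall>y\<in>Y. M *v y = y)}"

lemma is_proj_iff: "is_projection Y (\<lambda>x. M *v x) \<longleftrightarrow> M \<in> Proj"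
  by (auto simp: is_projection_def Proj_def)

lemma proj_values: "{op_norm_N N P | P. is_projection Y P} = FF ` Proj"
proof (intro set_eqI iffI)
  fix s assume "s \<in> {op_norm_N N P | P. is_projection Y P}"
  then obtain P where P: "is_projection Y P" "s = op_norm_N N P" by blast
  have lin: "linear P" using P(1) by (simp add: is_projection_def)
  have eq: "(\<lambda>x. matrix P *v x) = P" using lin by simp
  have "matrix P \<in> Proj" using P(1) is_proj_iff[of "matrix P"] eq by simp
  moreover have "s = FF (matrix P)" using P(2) opnorm_FF[of "matrix P"] eq by simp
  ultimately show "s \<in> FF ` Proj" by blast
next
  fix s assume "s \<in> FF ` Proj"
  then obtain M where M: "M \<in> Proj" "s = FF M" by blast
  then have "is_projection Y (\<lambda>x. M *v x)" using is_proj_iff by blast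
  moreover have "s = op_norm_N N (\<lambda>x. M *v x)" using M(2) opnorm_FF by simp
  ultimately show "s \<in> {op_norm_N N P | P. is_projection Y P}" by blast
qed

lemma Proj_ne: "Proj \<noteq> {}"
proof -
  obtain Bs where Bs: "Bs \<subseteq> Y" "independent Bs" "Y \<subseteq> span Bs" "card Bs = dim Y" by (rule basis_exists)
  obtain Bt where Bt: "Bs \<subseteq> Bt" "independent Bt" "UNIV \<subseteq> span Bt"
    by (rule maximal_independent_subset_extend[OF subset_UNIV Bs(2)])
  obtain g :: "real^'n \<Rightarrow> real^'n" where g: "linear g" "\<forall>x\<in>Bt. g x = (if x \<in> Bs then x else 0)"
    using linear_independent_extend[OF Bt(2), of "\<lambda>x. if x \<in> Bs then x else 0"] by blast
  have hb: "\<And>b. b \<in> Bs \<Longrightarrow> g b = id b" using g(2) Bt(1) by auto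
  have gY: "g y = y" if "y \<in> Y" for y
  proof -
    have "y \<in> span Bs" using Bs(3) that by blast
    then have "g y = id y" using linear_eq_on_span[of g id Bs y] g(1) linear_id hb by blast
    then show ?thesis by simp
  qed
  have gR: "g x \<in> Y" for x
  proof -
    have "x \<in> span Bt" using Bt(3) by blast
    then have "g x \<in> span (g ` Bt)" unfolding span_linear_image[OF g(1)] by blast
    moreover have "g ` Bt \<subseteq> Y" using g(2) Bs(1) subspace_0[OF subY] by auto
    ultimately show ?thesis using span_minimal[OF _ subY] by blast
  qed
  have e: "matrix g *v x = g x" for x using fun_cong[OF matrix_vector_mul(2)[OF g(1)], of x] by simp
  have "matrix g \<in> Proj" unfolding Proj_def using gY gR by (simp add: e)
  then show ?thesis by blast
qed

lemma closed_Proj: "closed Proj"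
proof -
  have lin: "linear (\<lambda>M::real^'n^'n. M *v x)" for x
    by (simp add: linear_iff matrix_vector_mult_add_rdistrib scaleR_matrix_vector_assoc[symmetric])
  have cont: "continuous (at M) (\<lambda>M::real^'n^'n. M *v x)" for x M
    using lin linear_conv_bounded_linear linear_continuous_at by blast
  have c1: "closed ((\<lambda>M::real^'n^'n. M *v x) -` Y)" for x
    using continuous_closed_vimage[OF closed_subspace[OF subY] cont] .
  have c2: "closed ((\<lambda>M::real^'n^'n. M *v y) -` {y})" for y
    using continuous_closed_vimage[OF closed_singleton cont] .
  have "Proj = (\<Inter>x. (\<lambda>M. M *v x) -` Y) \<inter> (\<Inter>y\<in>Y. (\<lambda>M. M *v y) -` {y})"
    by (auto simp: Proj_def)
  then show ?thesis using c1 c2 by (auto intro!: closed_INT closed_Int)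
qed

lemma exists_min: "\<exists>M\<in>Proj. \<forall>M'\<in>Proj. FF M \<le> FF M'"
proof -
  obtain M1 where M1: "M1 \<in> Proj" using Proj_ne by blast
  define C where "C = Proj \<inter> {M. FF M \<le> FF M1}"
  obtain K where K0: "0 \<le> K" and K: "\<And>M i j. \<bar>M $ i $ j\<bar> \<le> K * FF M" using entry_bound by metis
  have "closed {M. FF M \<le> FF M1}"
    using cont_FF by (intro closed_Collect_le) auto
  then have clC: "closed C" using closed_Proj by (simp add: C_def closed_Int)
  have "norm M \<le> (\<Sum>i\<in>(UNIV::'n set). \<Sum>j\<in>(UNIV::'n set). K * FF M1)" if "M \<in> C" for M
  proof -
    have "norm M \<le> (\<Sum>i\<in>UNIV. norm (M $ i))" by (rule norm_vec_le_sum)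
    also have "\<dots> \<le> (\<Sum>i\<in>UNIV. \<Sum>j\<in>UNIV. \<bar>M $ i $ j\<bar>)"
      by (intro sum_mono norm_le_l1_cart)
    also have "\<dots> \<le> (\<Sum>i\<in>(UNIV::'n set). \<Sum>j\<in>(UNIV::'n set). K * FF M1)"
    proof -
      have pt: "\<bar>M $ i $ j\<bar> \<le> K * FF M1" for i j
      proof -
        have "\<bar>M $ i $ j\<bar> \<le> K * FF M" by (rule K)
        also have "\<dots> \<le> K * FF M1" using that K0 by (intro mult_left_mono) (auto simp: C_def)
        finally show ?thesis .
      qed
      show ?thesis by (intro sum_mono pt)
    qed
    finally show ?thesis .
  qed
  then have "bounded C" unfolding bounded_iff by blast
  then have "compact C" using clC compact_eq_bounded_closed by blast
  moreover have "C \<noteq> {}" using M1 by (auto simp: C_def)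
  ultimately obtain M0 where M0: "M0 \<in> C" "\<forall>M\<in>C. FF M0 \<le> FF M"
    using continuous_attains_inf[of C FF] continuous_on_subset[OF cont_FF] by blast
  have "FF M0 \<le> FF M" if "M \<in> Proj" for M
  proof (cases "M \<in> C")
    case True then show ?thesis using M0 by blast
  next
    case False
    then have "FF M1 < FF M" using that by (auto simp: C_def)
    moreover have "FF M0 \<le> FF M1" using M0 M1 by (auto simp: C_def)
    ultimately show ?thesis by linarith
  qed
  then show ?thesis using M0(1) by (auto simp: C_def)
qed

end


lemma dim_cut:
  fixes A :: "'a::euclidean_space set" and f :: "'a \<Rightarrow> real"
  assumes A: "subspace A" and f: "linear f"
  shows "dim A \<le> dim (A \<inter> {x. f x = 0}) + 1"
proof (cases "\<forall>a\<in>A. f a = 0")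
  case True
  then have "A \<inter> {x. f x = 0} = A" by auto
  then show ?thesis by simp
next
  case False
  then obtain a0 where a0: "a0 \<in> A" "f a0 \<noteq> 0" by blast
  let ?Z = "A \<inter> {x. f x = 0}"
  have "A \<subseteq> span (insert a0 ?Z)"
  proof
    fix a assume a: "a \<in> A"
    let ?c = "f a / f a0"
    have "a - ?c *\<^sub>R a0 \<in> ?Z"
      using a a0 A f by (auto simp: subspace_diff subspace_scale linear_diff linear_scale)
    then have "a - ?c *\<^sub>R a0 \<in> span (insert a0 ?Z)" by (meson insertI2 span_base)
    moreover have "?c *\<^sub>R a0 \<in> span (insert a0 ?Z)" by (simp add: span_base span_scale)
    ultimately have "(a - ?c *\<^sub>R a0) + ?c *\<^sub>R a0 \<in> span (insert a0 ?Z)" by (rule span_add)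
    then show "a \<in> span (insert a0 ?Z)" by simp
  qed
  then have "dim A \<le> dim (span (insert a0 ?Z))" by (rule dim_subset)
  also have "\<dots> = dim (insert a0 ?Z)" by simp
  also have "\<dots> \<le> dim ?Z + 1" by (simp add: dim_insert)
  finally show ?thesis .
qed

context pproj begin

definition "L = {E::real^'n^'n. (\<forall>x. E *v x \<in> Y) \<and> (\<forall>y\<in>Y. E *v y = 0)}"

lemma subspace_L: "subspace L"
  unfolding subspace_def L_def
  by (auto simp: matrix_vector_mult_add_rdistrib scaleR_matrix_vector_assoc[symmetric]
      subspace_add[OF subY] subspace_scale[OF subY] subspace_0[OF subY])

lemma Proj_add: "M \<in> Proj \<Longrightarrow> E \<in> L \<Longrightarrow> M + t *\<^sub>R E \<in> Proj"
  unfolding Proj_def L_def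
  by (auto simp: matrix_vector_mult_add_rdistrib scaleR_matrix_vector_assoc[symmetric]
      subspace_add[OF subY] subspace_scale[OF subY])

definition ell :: "((real^'n) \<times> (real^'n)) \<Rightarrow> real^'n^'n \<Rightarrow> real" where
  "ell p E = snd p \<bullet> (E *v fst p)"

lemma linear_ell: "linear (ell p)"
  unfolding ell_def by (rule linear_Mx)

lemma ell_add: "ell p (M + t *\<^sub>R E) = ell p M + t * ell p E"
  unfolding ell_def
  by (simp add: matrix_vector_mult_add_rdistrib scaleR_matrix_vector_assoc[symmetric] inner_add_right)

lemma FF_eq: "FF M = Max ((\<lambda>p. ell p M) ` (V \<times> W))"
  unfolding FF_def ell_def by (simp add: case_prod_beta)

lemma FF_ge': "p \<in> V \<times> W \<Longrightarrow> ell p M \<le> FF M"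
  unfolding FF_eq using finVW by (intro Max_ge) auto

lemma FF_le_iff: "FF M \<le> c \<longleftrightarrow> (\<forall>p\<in>V \<times> W. ell p M \<le> c)"
  unfolding FF_eq using finVW VW_ne by simp

lemma FF_less_iff: "FF M < c \<longleftrightarrow> (\<forall>p\<in>V \<times> W. ell p M < c)"
  unfolding FF_eq using finVW VW_ne by simp

definition "act M = {p \<in> V \<times> W. ell p M = FF M}"
definition "KK S = {E \<in> L. \<forall>p\<in>S. ell p E = 0}"
definition "ismin M \<longleftrightarrow> M \<in> Proj \<and> (\<forall>M'\<in>Proj. FF M \<le> FF M')"

lemma fin_act: "finite (act M)" using finVW by (auto simp: act_def intro: finite_subset)

lemma subspace_KK: "subspace (KK S)"
proof -
  have l: "ell p (x + y) = ell p x + ell p y" "ell p (c *\<^sub>R x) = c * ell p x" "ell p 0 = 0" for p x y c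
    using linear_ell[of p] by (auto simp: linear_add linear_scale linear_0)
  show ?thesis using subspace_L unfolding subspace_def KK_def by (auto simp: l)
qed

lemma KK_anti: "S \<subseteq> T \<Longrightarrow> KK T \<subseteq> KK S" by (auto simp: KK_def)

lemma sep: assumes "\<forall>p\<in>V \<times> W. ell p E = 0" shows "E = 0"
proof -
  have EV: "E *v v = 0" if v: "v \<in> V" for v
  proof -
    have "(\<lambda>w. w \<bullet> (E *v v)) ` W = {0}"
      using assms v W_ne by (auto simp: ell_def)
    then have "N (E *v v) = 0" using N_max[of "E *v v"] by simp
    then show ?thesis using Neq0 by blast
  qed
  have EB: "E *v z = 0" if z: "z \<in> B" for z
  proof -
    have "a \<bullet> (E *v z) \<le> 0" for a
      using hull_le[OF linear_wM, of a E 0 z] EV z by simp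
    from this[of "E *v z"] show ?thesis by (metis antisym inner_ge_zero inner_eq_zero_iff)
  qed
  have "E *v x = 0" for x
  proof (cases "x = 0")
    case False
    have "x = N x *\<^sub>R ((1 / N x) *\<^sub>R x)" using Npos[OF False] by simp
    then have "E *v x = N x *\<^sub>R (E *v ((1 / N x) *\<^sub>R x))"
      by (metis matrix_vector_mult_scaleR)
    then show ?thesis using EB[OF normalize_B[OF False]] by simp
  qed simp
  then show ?thesis by (simp add: matrix_eq)
qed

lemma dimKK: "finite S \<Longrightarrow> dim L \<le> dim (KK S) + card S"
proof (induction S rule: finite_induct)
  case empty
  have "KK {} = L" by (auto simp: KK_def)
  then show ?case by simp
next
  case (insert p S)
  have "KK (insert p S) = KK S \<inter> {E. ell p E = 0}" by (auto simp: KK_def)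
  then have "dim (KK S) \<le> dim (KK (insert p S)) + 1"
    using dim_cut[OF subspace_KK linear_ell, of S p] by simp
  then show ?case using insert by simp
qed

end


context pproj begin

lemma terminal:
  assumes mn: "ismin M" and K0: "KK (act M) = {0}"
  shows "dim L + 1 \<le> card (act M)"
proof (rule ccontr)
  let ?S = "act M"
  assume "\<not> dim L + 1 \<le> card ?S"
  hence cS: "card ?S \<le> dim L" by simp
  have ex: "\<exists>E. E \<in> KK (?S - {s}) \<and> ell s E \<noteq> 0" if s: "s \<in> ?S" for s
  proof -
    have fin: "finite (?S - {s})" using fin_act by simp
    have c1: "card (?S - {s}) = card ?S - 1" using s fin_act by simp
    have c2: "card ?S \<ge> 1" using s fin_act by (metis One_nat_def Suc_leI card_gt_0_iff empty_iff)
    have "dim L \<le> dim (KK (?S - {s})) + card (?S - {s})" using dimKK[OF fin] .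
    hence d1: "1 \<le> dim (KK (?S - {s}))" using c1 c2 cS by linarith
    have "\<exists>E\<in>KK (?S - {s}). E \<noteq> 0"
    proof (rule ccontr)
      assume "\<not> (\<exists>E\<in>KK (?S - {s}). E \<noteq> 0)"
      then have "KK (?S - {s}) \<subseteq> {0}" by auto
      then have "dim (KK (?S - {s})) \<le> dim {0::real^'n^'n}" by (rule dim_subset)
      then have "dim (KK (?S - {s})) = 0" by simp
      then show False using d1 by linarith
    qed
    then obtain E where E: "E \<in> KK (?S - {s})" "E \<noteq> 0" by blast
    have "ell s E \<noteq> 0"
    proof
      assume "ell s E = 0"
      then have "E \<in> KK ?S" using E(1) by (auto simp: KK_def)
      then show False using K0 E(2) by blast
    qed
    then show ?thesis using E(1) by blast
  qed
  then obtain Ef where Ef: "\<And>s. s \<in> ?S \<Longrightarrow> Ef s \<in> KK (?S - {s}) \<and> ell s (Ef s) \<noteq> 0" by metis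
  define G where "G s = (-1 / ell s (Ef s)) *\<^sub>R Ef s" for s
  define Et where "Et = (\<Sum>s\<in>?S. G s)"
  have lsc: "ell p (c *\<^sub>R X) = c * ell p X" for p c X
    using linear_ell[of p] by (simp add: linear_scale)
  have lneg0: "ell p (- X) = - ell p X" for p X using linear_ell[of p] by (simp add: linear_neg)
  have GL: "G s \<in> L" if "s \<in> ?S" for s
  proof -
    have "Ef s \<in> L" using Ef[OF that] by (simp add: KK_def)
    then show ?thesis unfolding G_def by (rule subspace_scale[OF subspace_L])
  qed
  have EtL: "Et \<in> L" unfolding Et_def using subspace_sum[OF subspace_L] GL by blast
  have Gself: "ell s (G s) = -1" if "s \<in> ?S" for s
    using Ef[OF that] by (simp add: G_def lsc lneg0)
  have Gother: "ell t (G s) = 0" if "s \<in> ?S" "t \<in> ?S" "t \<noteq> s" for s t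
    using Ef[OF that(1)] that by (auto simp: G_def lsc lneg0 KK_def)
  have Et_val: "ell t Et = -1" if t: "t \<in> ?S" for t
  proof -
    have "ell t Et = (\<Sum>s\<in>?S. ell t (G s))" unfolding Et_def
      using linear_sum[OF linear_ell[of t]] by (simp add: o_def)
    also have "\<dots> = (\<Sum>s\<in>?S. if s = t then -1 else 0)"
      by (rule sum.cong) (auto simp: Gself Gother t)
    also have "\<dots> = -1" using t fin_act by simp
    finally show ?thesis .
  qed
  have "\<forall>p\<in>V \<times> W. eventually (\<lambda>\<tau>. ell p (M + \<tau> *\<^sub>R Et) < FF M) (at_right (0::real))"
  proof
    fix p assume p: "p \<in> V \<times> W"
    show "eventually (\<lambda>\<tau>. ell p (M + \<tau> *\<^sub>R Et) < FF M) (at_right (0::real))"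
    proof (cases "p \<in> ?S")
      case True
      have "ell p M = FF M" using True by (simp add: act_def)
      then have e: "ell p (M + \<tau> *\<^sub>R Et) = FF M - \<tau>" for \<tau> using Et_val[OF True] by (simp add: ell_add)
      show ?thesis using eventually_at_right_less[of "0::real"] by (auto simp: e elim!: eventually_mono)
    next
      case False
      have lt: "ell p M < FF M" using False p FF_ge'[OF p, of M] by (auto simp: act_def)
      have "((\<lambda>\<tau>. ell p M + \<tau> * ell p Et) \<longlongrightarrow> ell p M + 0 * ell p Et) (at_right 0)"
        by (intro tendsto_intros)
      then have "eventually (\<lambda>\<tau>. ell p M + \<tau> * ell p Et < FF M) (at_right (0::real))"
        using lt by (intro order_tendstoD(2)) auto
      then show ?thesis by (simp add: ell_add)
    qed
  qed
  from eventually_ball_finite[OF finVW this]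
  have ev: "eventually (\<lambda>\<tau>. \<forall>p\<in>V \<times> W. ell p (M + \<tau> *\<^sub>R Et) < FF M) (at_right (0::real))" .
  obtain \<tau> where "\<forall>p\<in>V \<times> W. ell p (M + \<tau> *\<^sub>R Et) < FF M"
    using eventually_happens[OF ev] trivial_limit_at_right_real[of 0] by (auto simp: trivial_limit_def)
  then have "FF (M + \<tau> *\<^sub>R Et) < FF M" by (simp add: FF_less_iff)
  moreover have "M + \<tau> *\<^sub>R Et \<in> Proj" using Proj_add mn EtL by (simp add: ismin_def)
  ultimately show False using mn by (auto simp: ismin_def not_le[symmetric])
qed

lemma move:
  assumes mn: "ismin M" and E: "E \<in> KK (act M)" "E \<noteq> 0"
  shows "\<exists>M'. ismin M' \<and> KK (act M') \<subset> KK (act M)"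
proof -
  obtain r where r: "r \<in> V \<times> W" "ell r E \<noteq> 0" using sep E(2) by blast
  have lneg: "ell p (- X) = - ell p X" for p X using linear_ell[of p] by (simp add: linear_neg)
  define E1 where "E1 = (if ell r E > 0 then E else -E)"
  have E1K: "E1 \<in> KK (act M)" using E(1) subspace_KK subspace_neg by (auto simp: E1_def)
  have r1: "ell r E1 > 0" using r(2) by (auto simp: E1_def lneg)
  define R where "R = {p \<in> V \<times> W. ell p E1 > 0}"
  have finR: "finite R" using finVW by (auto simp: R_def intro: finite_subset)
  have neR: "R \<noteq> {}" using r(1) r1 by (auto simp: R_def)
  define tf where "tf p = (FF M - ell p M) / ell p E1" for p
  define t where "t = Min (tf ` R)"
  have "t \<in> tf ` R" unfolding t_def using finR neR by simp
  then obtain rs where rs: "rs \<in> R" "tf rs = t" by auto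
  have tle: "t \<le> tf p" if "p \<in> R" for p unfolding t_def using finR that by simp
  have t0: "0 \<le> t"
  proof -
    have "ell rs M \<le> FF M" using rs(1) FF_ge' by (auto simp: R_def)
    moreover have "ell rs E1 > 0" using rs(1) by (auto simp: R_def)
    ultimately show ?thesis using rs(2) by (auto simp: tf_def)
  qed
  define M' where "M' = M + t *\<^sub>R E1"
  have E1L: "E1 \<in> L" using E1K by (simp add: KK_def)
  have M'P: "M' \<in> Proj" using Proj_add mn E1L by (simp add: ismin_def M'_def)
  have le: "ell p M' \<le> FF M" if p: "p \<in> V \<times> W" for p
  proof (cases "ell p E1 > 0")
    case True
    then have "p \<in> R" using p by (simp add: R_def)
    then have "t \<le> (FF M - ell p M) / ell p E1" using tle tf_def by simp
    then have "t * ell p E1 \<le> FF M - ell p M" using True by (simp add: le_divide_eq)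
    then show ?thesis by (simp add: M'_def ell_add)
  next
    case False
    then have "t * ell p E1 \<le> 0" using t0 by (simp add: mult_nonneg_nonpos)
    moreover have "ell p M \<le> FF M" using FF_ge' p by blast
    ultimately show ?thesis by (simp add: M'_def ell_add)
  qed
  have FFM': "FF M' = FF M"
  proof (rule antisym)
    show "FF M' \<le> FF M" using le by (simp add: FF_le_iff)
    show "FF M \<le> FF M'" using mn M'P by (simp add: ismin_def)
  qed
  have mn': "ismin M'" using mn M'P FFM' by (simp add: ismin_def)
  have sub: "act M \<subseteq> act M'"
  proof
    fix p assume p: "p \<in> act M"
    then have "ell p E1 = 0" using E1K by (auto simp: KK_def)
    then show "p \<in> act M'" using p FFM' by (auto simp: act_def M'_def ell_add)
  qed
  have rsA: "rs \<in> act M'"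
  proof -
    have pos: "ell rs E1 > 0" using rs(1) by (simp add: R_def)
    have "ell rs M' = ell rs M + tf rs * ell rs E1" using rs(2) by (simp add: M'_def ell_add)
    also have "\<dots> = FF M" using pos by (simp add: tf_def)
    finally show ?thesis using rs(1) FFM' by (simp add: act_def R_def)
  qed
  have "KK (act M') \<subseteq> KK (act M)" using KK_anti[OF sub] .
  moreover have "E1 \<notin> KK (act M')"
  proof -
    have "ell rs E1 \<noteq> 0" using rs(1) by (simp add: R_def)
    then show ?thesis using rsA unfolding KK_def by blast
  qed
  ultimately have "KK (act M') \<subset> KK (act M)" using E1K by blast
  then show ?thesis using mn' by blast
qed

lemma iterate: "ismin M \<Longrightarrow> \<exists>M'. ismin M' \<and> KK (act M') = {0}"
proof (induction "dim (KK (act M))" arbitrary: M rule: less_induct)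
  case less
  show ?case
  proof (cases "KK (act M) = {0}")
    case True then show ?thesis using less.prems by blast
  next
    case False
    have "0 \<in> KK (act M)" using subspace_KK subspace_0 by blast
    then obtain E where "E \<in> KK (act M)" "E \<noteq> 0" using False by blast
    then obtain M' where M': "ismin M'" "KK (act M') \<subset> KK (act M)" using move less.prems by blast
    have "dim (KK (act M')) < dim (KK (act M))"
    proof -
      have sp: "span (KK S) = KK S" for S using subspace_KK[of S] by simp
      show ?thesis using dim_psubset[of "KK (act M')" "KK (act M)"] M'(2) unfolding sp by blast
    qed
    then show ?thesis using less.hyps M'(1) by blast
  qed
qed

end


definition outer :: "real^'n \<Rightarrow> real^'n \<Rightarrow> real^'n^'n" where
  "outer a b = (\<chi> i j. a $ i * b $ j)"

lemma outer_mult: "outer a b *v x = (b \<bullet> x) *\<^sub>R a"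
proof (subst vec_eq_iff, intro allI)
  fix i
  have "(outer a b *v x) $ i = (\<Sum>j\<in>UNIV. a $ i * (b $ j * x $ j))"
    by (simp add: outer_def matrix_vector_mult_def mult.assoc)
  also have "\<dots> = a $ i * (\<Sum>j\<in>UNIV. b $ j * x $ j)" by (rule sum_distrib_left[symmetric])
  also have "\<dots> = ((b \<bullet> x) *\<^sub>R a) $ i" by (simp add: inner_vec_def mult.commute)
  finally show "(outer a b *v x) $ i = ((b \<bullet> x) *\<^sub>R a) $ i" .
qed

lemma outer_scale1: "outer (c *\<^sub>R a) b = c *\<^sub>R outer a b"
  by (simp add: outer_def vec_eq_iff mult.assoc)

lemma outer_nth: "outer a b $ i $ j = a $ i * b $ j" by (simp add: outer_def)

lemma linear_outer1: "linear (\<lambda>a. outer a b)"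
  by (simp add: linear_iff outer_def vec_eq_iff algebra_simps)

lemma linear_outer2: "linear (\<lambda>b. outer a b)"
  by (simp add: linear_iff outer_def vec_eq_iff algebra_simps)

context pproj begin

lemma outer_L:
  assumes a: "a \<in> Y" and b: "b \<in> {y. \<forall>x\<in>Y. orthogonal x y}"
  shows "outer a b \<in> L"
proof -
  have "outer a b *v x \<in> Y" for x using a subspace_scale[OF subY] by (simp add: outer_mult)
  moreover have "outer a b *v y = 0" if "y \<in> Y" for y
  proof -
    have "b \<bullet> y = 0" using b that by (metis (mono_tags) mem_Collect_eq orthogonal_def inner_commute)
    then show ?thesis by (simp add: outer_mult)
  qed
  ultimately show ?thesis by (simp add: L_def)
qed

lemma dimL:
  assumes k: "dim Y = k" "1 \<le> k" "k \<le> CARD('n) - 1"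
  shows "CARD('n) - 1 \<le> dim L"
proof -
  define Yp where "Yp = {y. \<forall>x\<in>Y. orthogonal x y}"
  have sYp: "subspace Yp" unfolding Yp_def by (rule subspace_orthogonal_to_vectors)
  have dimYp: "dim Yp + dim Y = CARD('n)"
    using dim_subspace_orthogonal_to_vectors[OF subY subspace_UNIV] by (simp add: Yp_def)
  have "\<exists>a0\<in>Y. a0 \<noteq> 0"
  proof (rule ccontr)
    assume "\<not> ?thesis" then have "Y \<subseteq> {0}" by auto
    then have "dim Y \<le> dim {0::real^'n}" by (rule dim_subset)
    then have "dim Y = 0" by simp
    then show False using k by linarith
  qed
  then obtain a0 where a0: "a0 \<in> Y" "a0 \<noteq> 0" by blast
  have "\<exists>b0\<in>Yp. b0 \<noteq> 0"
  proof (rule ccontr)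
    assume "\<not> ?thesis" then have "Yp \<subseteq> {0}" by auto
    then have "dim Yp \<le> dim {0::real^'n}" by (rule dim_subset)
    then have "dim Yp = 0" by simp
    then show False using k dimYp by linarith
  qed
  then obtain b0 where b0: "b0 \<in> Yp" "b0 \<noteq> 0" by blast
  obtain i0 where i0: "a0 $ i0 \<noteq> 0" using a0(2) by (metis vec_eq_iff zero_index)
  obtain j0 where j0: "b0 $ j0 \<noteq> 0" using b0(2) by (metis vec_eq_iff zero_index)
  define A1 where "A1 = (\<lambda>a. outer a b0) ` Y"
  define A2 where "A2 = (\<lambda>b. outer a0 b) ` Yp"
  have sA1: "subspace A1" unfolding A1_def by (rule linear_subspace_image[OF linear_outer1 subY])
  have sA2: "subspace A2" unfolding A2_def by (rule linear_subspace_image[OF linear_outer2 sYp])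
  have inj1: "inj_on (\<lambda>a. outer a b0) (span Y)"
  proof (rule inj_onI)
    fix a a' assume "outer a b0 = outer a' b0"
    then have "outer a b0 *v b0 = outer a' b0 *v b0" by simp
    then have "(b0 \<bullet> b0) *\<^sub>R a = (b0 \<bullet> b0) *\<^sub>R a'" by (simp add: outer_mult)
    then show "a = a'" using b0(2) by simp
  qed
  have inj2: "inj_on (\<lambda>b. outer a0 b) (span Yp)"
  proof (rule inj_onI)
    fix b b' assume e: "outer a0 b = outer a0 b'"
    have "b $ j = b' $ j" for j
    proof -
      have "outer a0 b $ i0 $ j = outer a0 b' $ i0 $ j" using e by simp
      then show ?thesis using i0 by (simp add: outer_nth)
    qed
    then show "b = b'" by (simp add: vec_eq_iff)
  qed
  have d1: "dim A1 = dim Y" unfolding A1_def by (rule dim_image_eq[OF linear_outer1 inj1])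
  have d2: "dim A2 = dim Yp" unfolding A2_def by (rule dim_image_eq[OF linear_outer2 inj2])
  have int: "A1 \<inter> A2 \<subseteq> span {outer a0 b0}"
  proof
    fix X assume X: "X \<in> A1 \<inter> A2"
    then obtain a b where ab: "X = outer a b0" "X = outer a0 b"
      unfolding A1_def A2_def by blast
    define c where "c = b $ j0 / b0 $ j0"
    have "a $ i = c * a0 $ i" for i
    proof -
      have "outer a b0 $ i $ j0 = outer a0 b $ i $ j0" using ab by simp
      then have "a $ i * b0 $ j0 = a0 $ i * b $ j0" by (simp add: outer_nth)
      then show ?thesis using j0 by (simp add: c_def field_simps)
    qed
    then have "a = c *\<^sub>R a0" by (simp add: vec_eq_iff)
    then have "X = c *\<^sub>R outer a0 b0" using ab(1) by (simp add: outer_scale1)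
    then show "X \<in> span {outer a0 b0}" by (simp add: span_base span_scale)
  qed
  have "dim (A1 \<inter> A2) \<le> dim (span {outer a0 b0})" using int by (rule dim_subset)
  also have "\<dots> \<le> 1" by (simp add: dim_singleton)
  finally have dI: "dim (A1 \<inter> A2) \<le> 1" .
  have sums: "dim {x + y |x y. x \<in> A1 \<and> y \<in> A2} + dim (A1 \<inter> A2) = dim A1 + dim A2"
    by (rule dim_sums_Int[OF sA1 sA2])
  have subL: "{x + y |x y. x \<in> A1 \<and> y \<in> A2} \<subseteq> L"
  proof
    fix Z assume "Z \<in> {x + y |x y. x \<in> A1 \<and> y \<in> A2}"
    then obtain x y where xy: "Z = x + y" "x \<in> A1" "y \<in> A2" by blast
    have "x \<in> L" using xy(2) a0 b0 outer_L unfolding A1_def Yp_def by blast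
    moreover have "y \<in> L" using xy(3) a0 b0 outer_L unfolding A2_def Yp_def by blast
    ultimately show "Z \<in> L" using xy(1) subspace_add[OF subspace_L] by blast
  qed
  have "dim {x + y |x y. x \<in> A1 \<and> y \<in> A2} \<le> dim L" using subL by (rule dim_subset)
  then show ?thesis using sums dI d1 d2 dimYp k by linarith
qed

end

theorem mainTheorem3:
  fixes N :: "real^'n \<Rightarrow> real" and Y :: "(real^'n) set" and k :: nat
  assumes "polyhedral_norm N"
    and "subspace Y" and "dim Y = k"
    and "1 \<le> k" and "k \<le> CARD('n) - 1"
  shows "\<exists>P \<in> min_projections N Y. CARD('n) \<le> card (norming_pairs N P)"
proof -
  interpret pproj N Y by unfold_locales (use assms in auto)
  obtain M0 where M0: "M0 \<in> Proj" "\<forall>M'\<in>Proj. FF M0 \<le> FF M'" using exists_min by blast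
  then have "ismin M0" by (simp add: ismin_def)
  then obtain M where M: "ismin M" "KK (act M) = {0}" using iterate by blast
  have c: "dim L + 1 \<le> card (act M)" using terminal M by blast
  have d: "CARD('n) - 1 \<le> dim L" using dimL assms(3-5) by blast
  have proj: "is_projection Y (\<lambda>x. M *v x)" using is_proj_iff M(1) by (simp add: ismin_def)
  have on: "op_norm_N N (\<lambda>x. M *v x) = FF M" by (rule opnorm_FF)
  have pc: "proj_const N Y = FF M"
    unfolding proj_const_def proj_values
    by (rule cInf_eq_minimum) (use M(1) in \<open>auto simp: ismin_def\<close>)
  have mp: "(\<lambda>x. M *v x) \<in> min_projections N Y" using proj on pc by (simp add: min_projections_def)
  have np: "norming_pairs N (\<lambda>x. M *v x) = act M"
    unfolding norming_pairs_def act_def on by (auto simp: V_def W_def ell_def)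
  have "0 < CARD('n)" by simp
  then have "CARD('n) \<le> card (act M)" using c d by linarith
  then have "CARD('n) \<le> card (norming_pairs N (\<lambda>x. M *v x))" using np by simp
  then show ?thesis using mp by blast
qed


end
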